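(* Let $K$ be a causal poset with a symmetry group $S$. Then $K$ has a covariant path-frame system if and only if for every pair $o,a\in K$ there is a path joining $a$ to $o$ all of whose generating 1-simplices are invariant under $S_a\cap S_o$.
   Context: A causal poset is a pathwise connected poset $(K,\le)$ with an irreflexive symmetric relation $\perp$ satisfying $o\perp a,\ \tilde o\le o\Rightarrow\tilde o\perp a$; a symmetry group $S$ is a group of bijections of $K$ preserving $\le$ and $\perp$ in both directions; $S_a=\{s\in S:s(a)=a\}$ is the stabilizer of $a$. A 1-simplex is $b=(|b|;\partial_0b,\partial_1b)$ with $\partial_0b,\partial_1b\le|b|$, opposite $\overline b=(|b|;\partial_1b,\partial_0b)$, and $s\in S$ acts by $s(b)=(s(|b|);s(\partial_0b),s(\partial_1b))$; $b$ is invariant under a subgroup $H$ if $s(b)=b$ for all $s\in H$. $\mathrm T_1(K)$: 1-simplices with $\partial_0b\ne|b|\ne\partial_1b$. $\mathrm F(K)$: group generated by $\mathrm T_1(K)$ with $b^{-1}=\overline b$; $S$ acts on words letterwise. A path from $a$ to $o$ is a word $b_n\cdots b_1$ ($b_i\in\mathrm T_1(K)$, possibly empty when $a=o$) with $\partial_1b_1=a$, $\partial_0b_n=o$, $\partial_0b_i=\partial_1b_{i+1}$. A path-frame $P_o$ over a pole $o\in K$ is a choice, for every $a\in K$, of a path $p_{(o,a)}$ from $o$ to $a$, with $p_{(o,o)}=1$ (the empty word). A covariant path-frame system is a family $\{P_o:o\in K\}$ of path-frames such that $s(p_{(a,x)})=p_{(s(a),s(x))}$ for all $a,x\in K$, $s\in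 S$. *)

theory Defs
  imports Main
begin

text \<open>The poset K is the carrier type 'a with its order; 1-simplices are records
  (support, boundary 0, boundary 1).\<close>

record 'a simplex1 =
  supp :: 'a
  bd0  :: 'a
  bd1  :: 'a

definition is_simplex1 :: "'a::order simplex1 \<Rightarrow> bool" where
  "is_simplex1 b \<longleftrightarrow> bd0 b \<le> supp b \<and> bd1 b \<le> supp b"

definition opp :: "'a simplex1 \<Rightarrow> 'a simplex1" where
  "opp b = \<lparr>supp = supp b, bd0 = bd1 b, bd1 = bd0 b\<rparr>"

definition act :: "('a \<Rightarrow> 'a) \<Rightarrow> 'a simplex1 \<Rightarrow> 'a simplex1" where
  "act s b = \<lparr>supp = s (supp b), bd0 = s (bd0 b), bd1 = s (bd1 b)\<rparr>"

definition T1 :: "'a::order simplex1 \<Rightarrow> bool" where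
  "T1 b \<longleftrightarrow> is_simplex1 b \<and> bd0 b \<noteq> supp b \<and> supp b \<noteq> bd1 b"

text \<open>A path b_n ... b_1 from a to z is represented by the list [b_1, ..., b_n].\<close>
fun is_path :: "'a::order \<Rightarrow> 'a \<Rightarrow> 'a simplex1 list \<Rightarrow> bool" where
  "is_path a z [] \<longleftrightarrow> a = z"
| "is_path a z (b # bs) \<longleftrightarrow> T1 b \<and> bd1 b = a \<and> is_path (bd0 b) z bs"

definition pathwise_connected :: "'a::order itself \<Rightarrow> bool" where
  "pathwise_connected _ \<longleftrightarrow> (\<forall>(a::'a) z. \<exists>p. is_path a z p)"

definition causal_poset :: "('a::order \<Rightarrow> 'a \<Rightarrow> bool) \<Rightarrow> bool" where
  "causal_poset perp \<longleftrightarrow> pathwise_connected TYPE('a)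
     \<and> (\<forall>a. \<not> perp a a) \<and> (\<forall>a b. perp a b \<longrightarrow> perp b a)
     \<and> (\<forall>z a z'. perp z a \<and> z' \<le> z \<longrightarrow> perp z' a)"

definition symmetry_group :: "('a::order \<Rightarrow> 'a \<Rightarrow> bool) \<Rightarrow> ('a \<Rightarrow> 'a) set \<Rightarrow> bool" where
  "symmetry_group perp S \<longleftrightarrow>
     id \<in> S \<and> (\<forall>s\<in>S. \<forall>t\<in>S. s \<circ> t \<in> S)
     \<and> (\<forall>s\<in>S. bij s \<and> inv s \<in> S)
     \<and> (\<forall>s\<in>S. \<forall>x y. (s x \<le> s y \<longleftrightarrow> x \<le> y) \<and> (perp (s x) (s y) \<longleftrightarrow> perp x y))"

definition stabilizer :: "('a \<Rightarrow> 'a) set \<Rightarrow> 'a \<Rightarrow> ('a \<Rightarrow> 'a) set" where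
  "stabilizer S a = {s \<in> S. s a = a}"

definition invariant_under :: "('a \<Rightarrow> 'a) set \<Rightarrow> 'a simplex1 \<Rightarrow> bool" where
  "invariant_under H b \<longleftrightarrow> (\<forall>s\<in>H. act s b = b)"

text \<open>A covariant path-frame system: p z a is the path p_(z,a) of the frame P_o.\<close>
definition covariant_path_frame_system ::
  "('a::order \<Rightarrow> 'a) set \<Rightarrow> ('a \<Rightarrow> 'a \<Rightarrow> 'a simplex1 list) \<Rightarrow> bool" where
  "covariant_path_frame_system S p \<longleftrightarrow>
     (\<forall>z a. is_path z a (p z a)) \<and> (\<forall>z. p z z = [])
     \<and> (\<forall>s\<in>S. \<forall>a x. map (act s) (p a x) = p (s a) (s x))"

end

theory Submission
  imports Defs
begin

lemma act_comp: "act (s \<circ> t) b = act s (act t b)"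
  by (simp add: act_def)

lemma act_id: "act id b = b"
  by (simp add: act_def)

lemma path_map:
  assumes mono: "\<And>x y. s x \<le> s y \<longleftrightarrow> x \<le> y" and inj: "inj s"
  shows "is_path x y q \<Longrightarrow> is_path (s x) (s y) (map (act s) q)"
proof (induction q arbitrary: x)
  case Nil then show ?case by simp
next
  case (Cons b bs)
  have "T1 (act s b)" using Cons.prems inj mono
    by (auto simp: T1_def is_simplex1_def act_def inj_eq)
  then show ?case using Cons by (auto simp: act_def)
qed

theorem proposition4p5:
  fixes perp :: "'a::order \<Rightarrow> 'a \<Rightarrow> bool" and S :: "('a \<Rightarrow> 'a) set"
  assumes "causal_poset perp" and "symmetry_group perp S"
  shows "(\<exists>p. covariant_path_frame_system S p) \<longleftrightarrow>
         (\<forall>(z::'a) a. \<exists>q. is_path a z q \<and>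
             (\<forall>b\<in>set q. invariant_under (stabilizer S a \<inter> stabilizer S z) b))"
proof
  assume "\<exists>p. covariant_path_frame_system S p"
  then obtain p where p: "covariant_path_frame_system S p" by blast
  show "\<forall>(z::'a) a. \<exists>q. is_path a z q \<and>
             (\<forall>b\<in>set q. invariant_under (stabilizer S a \<inter> stabilizer S z) b)"
  proof (intro allI exI conjI ballI)
    fix z a
    show "is_path a z (p a z)" using p by (simp add: covariant_path_frame_system_def)
    fix b assume b: "b \<in> set (p a z)"
    show "invariant_under (stabilizer S a \<inter> stabilizer S z) b"
      unfolding invariant_under_def
    proof
      fix s assume s: "s \<in> stabilizer S a \<inter> stabilizer S z"
      then have "map (act s) (p a z) = p a z" using p
        by (auto simp: covariant_path_frame_system_def stabilizer_def)
      then show "act s b = b" using b by (metis map_eq_conv map_ident)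
    qed
  qed
next
  assume H: "\<forall>(z::'a) a. \<exists>q. is_path a z q \<and>
             (\<forall>b\<in>set q. invariant_under (stabilizer S a \<inter> stabilizer S z) b)"
  have G: "id \<in> S" "\<And>s t. s \<in> S \<Longrightarrow> t \<in> S \<Longrightarrow> s \<circ> t \<in> S"
    "\<And>s. s \<in> S \<Longrightarrow> bij s" "\<And>s. s \<in> S \<Longrightarrow> inv s \<in> S"
    "\<And>s x y. s \<in> S \<Longrightarrow> s x \<le> s y \<longleftrightarrow> x \<le> y"
    using assms(2) by (auto simp: symmetry_group_def)
  have invl: "\<And>s. s \<in> S \<Longrightarrow> inv s \<circ> s = id"
    by (meson G(3) bij_is_inj inv_o_cancel)
  have invr: "\<And>s. s \<in> S \<Longrightarrow> s \<circ> inv s = id"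
    by (meson G(3) bij_is_surj surj_iff)
  define orb where "orb z a = {(s z, s a) | s. s \<in> S}" for z a :: 'a
  define rep where "rep z a = (SOME r. r \<in> orb z a)" for z a
  define q0 where "q0 r = (if fst r = snd r then [] else
      SOME q. is_path (fst r) (snd r) q \<and>
        (\<forall>b\<in>set q. invariant_under (stabilizer S (fst r) \<inter> stabilizer S (snd r)) b))"
    for r :: "'a \<times> 'a"
  define tr where "tr z a = (SOME t. t \<in> S \<and> t (fst (rep z a)) = z \<and> t (snd (rep z a)) = a)"
    for z a
  define p where "p z a = map (act (tr z a)) (q0 (rep z a))" for z a
  have rep_in: "rep z a \<in> orb z a" for z a
    unfolding rep_def by (rule someI_ex) (use G(1) in \<open>auto simp: orb_def\<close>)
  have q0: "is_path (fst r) (snd r) (q0 r) \<and>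
        (\<forall>b\<in>set (q0 r). invariant_under (stabilizer S (fst r) \<inter> stabilizer S (snd r)) b)" for r
  proof (cases "fst r = snd r")
    case True then show ?thesis by (simp add: q0_def)
  next
    case False
    then show ?thesis unfolding q0_def using H
      by (simp del: is_path.simps) (rule someI_ex, blast)
  qed
  have tr: "tr z a \<in> S \<and> tr z a (fst (rep z a)) = z \<and> tr z a (snd (rep z a)) = a" for z a
  proof -
    obtain s where s: "s \<in> S" "rep z a = (s z, s a)" using rep_in[of z a] unfolding orb_def by blast
    have "inj s" using G(3)[OF s(1)] by (rule bij_is_inj)
    have "inv s \<in> S \<and> inv s (fst (rep z a)) = z \<and> inv s (snd (rep z a)) = a"
      using s G(4)[OF s(1)] \<open>inj s\<close> by simp
    then have "\<exists>t. t \<in> S \<and> t (fst (rep z a)) = z \<and> t (snd (rep z a)) = a" by blast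
    from someI_ex[OF this] show ?thesis by (simp only: tr_def)
  qed
  have orb_eq: "s \<in> S \<Longrightarrow> orb (s z) (s a) = orb z a" for s z a
  proof -
    assume s: "s \<in> S"
    show ?thesis
    proof
      show "orb (s z) (s a) \<subseteq> orb z a"
        unfolding orb_def using G(2)[OF _ s] by (force simp: comp_def)
      show "orb z a \<subseteq> orb (s z) (s a)"
      proof
        fix x assume "x \<in> orb z a"
        then obtain t where t: "t \<in> S" "x = (t z, t a)" by (auto simp: orb_def)
        have "t \<circ> inv s \<in> S" using G(2)[OF t(1) G(4)[OF s]] .
        moreover have "(t \<circ> inv s) (s z) = t z" "(t \<circ> inv s) (s a) = t a"
          using G(3)[OF s] by (simp_all add: bij_is_inj)
        ultimately show "x \<in> orb (s z) (s a)" unfolding orb_def using t(2) by (metis (mono_tags, lifting) mem_Collect_eq)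
      qed
    qed
  qed
  have "covariant_path_frame_system S p"
    unfolding covariant_path_frame_system_def
  proof (intro conjI allI ballI)
    fix z a
    have "is_path (tr z a (fst (rep z a))) (tr z a (snd (rep z a))) (p z a)"
      unfolding p_def
      by (rule path_map) (use tr[of z a] G(5) G(3)[THEN bij_is_inj] q0 in auto)
    then show "is_path z a (p z a)" using tr[of z a] by simp
  next
    fix z
    have "fst (rep z z) = snd (rep z z)" using rep_in[of z z] by (auto simp: orb_def)
    then show "p z z = []" by (simp add: p_def q0_def)
  next
    fix s a x assume s: "s \<in> S"
    have R: "rep (s a) (s x) = rep a x" unfolding rep_def using orb_eq[OF s] by simp
    define r where "r = rep a x"
    define t where "t = tr a x"
    define t' where "t' = tr (s a) (s x)"
    have t: "t \<in> S" "t (fst r) = a" "t (snd r) = x" using tr[of a x] by (auto simp: t_def r_def)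
    have t': "t' \<in> S" "t' (fst r) = s a" "t' (snd r) = s x"
      using tr[of "s a" "s x"] R by (auto simp: t'_def r_def)
    have u: "inv t' \<circ> s \<circ> t \<in> stabilizer S (fst r) \<inter> stabilizer S (snd r)"
    proof -
      have "inv t' \<circ> s \<circ> t \<in> S" using G(2)[OF G(2)[OF G(4)[OF t'(1)] s] t(1)] .
      moreover have iv: "inv t' (t' y) = y" for y using G(3)[OF t'(1)] by (simp add: bij_is_inj)
      moreover have "(inv t' \<circ> s \<circ> t) (fst r) = fst r" by (metis comp_apply t(2) t'(2) iv)
      moreover have "(inv t' \<circ> s \<circ> t) (snd r) = snd r" by (metis comp_apply t(3) t'(3) iv)
      ultimately show ?thesis by (simp add: stabilizer_def)
    qed
    have "act s (act t b) = act t' b" if b: "b \<in> set (q0 r)" for b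
    proof -
      have "act (inv t' \<circ> s \<circ> t) b = b" using q0[of r] b u by (auto simp: invariant_under_def)
      then have "act t' b = act t' (act (inv t' \<circ> s \<circ> t) b)" by simp
      also have "\<dots> = act ((t' \<circ> inv t') \<circ> s \<circ> t) b" by (simp add: act_comp comp_assoc)
      also have "\<dots> = act s (act t b)" using invr[OF t'(1)] by (simp add: act_comp)
      finally show ?thesis by simp
    qed
    then show "map (act s) (p a x) = p (s a) (s x)"
      unfolding p_def R by (simp add: t_def[symmetric] t'_def[symmetric] r_def[symmetric])
  qed
  then show "\<exists>p. covariant_path_frame_system S p" by blast
qed

end
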